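(* Let $(X,d)$ be a metric space admitting a weak convergence $w$, and let $(G,\rho)$ be a proper metric group acting on $X$ such that the action is isometric, metrically compatible, and weakly compatible. Then $w$ is a weak convergence for $(X,d_{G,\rho})$.
   Context: A convergence $c$ on a set $X$ is a rule assigning at most one point of $X$ as the "limit" of each sequence in $X$, such that whenever a sequence has limit $x$, every subsequence also has limit $x$; we write $x_n\to x$ in $c$. A convergence $w$ on $X$ is a weak convergence for $(X,d)$ if: (W1) whenever $\{x_n\}$ and $y$ in $X$ satisfy $\sup_n d(x_n,y)<\infty$, there are a subsequence $\{n_k\}$ and $x\in X$ with $x_{n_k}\to x$ in $w$; (W2) whenever $x_n\to x$ in $w$, $d(x,y)\le\liminf_n d(x_n,y)$ for all $y\in X$; (W3) whenever $x_n\to x$ in $w$ and $d(x_n,y)\to d(x,y)$ for some $y\in X$, then $d(x_n,x)\to0$. $(G,\rho)$ is a metric group if $\rho$ is a left-invariant metric on the group $G$ whose topology makes $G$ a topological group; it is proper if, in addition, closed $\rho$-bounded sets are compact. The action is isometric if $d(g\cdot x,g\cdot x')=d(x,x')$; it is compatible with a convergence $c$ on $X$ if $x_n\to x$ in $c$ and $g_n\to g$ in $G$ imply $g_n\cdot x_n\to g\cdot x$ in $c$; metrically compatible means compatible with convergence in $d$, weakly compatible means compatible with $w$. The regularized metric is $d_{G,\rho}(x,x'):=\min_{g\in G}\sqrt{\rho^2(g,e)+d^2(x,g\cdot x')}$, where $e$ is the identity of $G$. *)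

theory Defs
  imports "HOL-Analysis.Analysis" "HOL-Algebra.Group"
begin

definition convergence :: "'x set \<Rightarrow> ((nat \<Rightarrow> 'x) \<Rightarrow> 'x \<Rightarrow> bool) \<Rightarrow> bool" where
  "convergence X c \<longleftrightarrow>
     (\<forall>xs x. c xs x \<longrightarrow> (\<forall>n. xs n \<in> X) \<and> x \<in> X) \<and>
     (\<forall>xs x y. c xs x \<and> c xs y \<longrightarrow> x = y) \<and>
     (\<forall>xs x r. c xs x \<and> strict_mono (r :: nat \<Rightarrow> nat) \<longrightarrow> c (xs \<circ> r) x)"

definition weak_convergence ::
  "'x set \<Rightarrow> ('x \<Rightarrow> 'x \<Rightarrow> real) \<Rightarrow> ((nat \<Rightarrow> 'x) \<Rightarrow> 'x \<Rightarrow> bool) \<Rightarrow> bool" where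
  "weak_convergence X d w \<longleftrightarrow>
     convergence X w \<and>
     (\<forall>xs y. (\<forall>n. xs n \<in> X) \<and> y \<in> X \<and> bdd_above (range (\<lambda>n. d (xs n) y)) \<longrightarrow>
        (\<exists>r x. strict_mono (r :: nat \<Rightarrow> nat) \<and> x \<in> X \<and> w (xs \<circ> r) x)) \<and>
     (\<forall>xs x y. w xs x \<and> y \<in> X \<longrightarrow> ereal (d x y) \<le> liminf (\<lambda>n. ereal (d (xs n) y))) \<and>
     (\<forall>xs x y. w xs x \<and> y \<in> X \<and> (\<lambda>n. d (xs n) y) \<longlonglongrightarrow> d x y \<longrightarrow>
        (\<lambda>n. d (xs n) x) \<longlonglongrightarrow> 0)"

definition metric_group :: "('g, 'b) monoid_scheme \<Rightarrow> ('g \<Rightarrow> 'g \<Rightarrow> real) \<Rightarrow> bool" where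
  "metric_group G \<rho> \<longleftrightarrow>
     group G \<and> Metric_space (carrier G) \<rho> \<and>
     (\<forall>g\<in>carrier G. \<forall>h\<in>carrier G. \<forall>h'\<in>carrier G. \<rho> (g \<otimes>\<^bsub>G\<^esub> h) (g \<otimes>\<^bsub>G\<^esub> h') = \<rho> h h') \<and>
     continuous_map
       (prod_topology (Metric_space.mtopology (carrier G) \<rho>) (Metric_space.mtopology (carrier G) \<rho>))
       (Metric_space.mtopology (carrier G) \<rho>) (\<lambda>(g, h). g \<otimes>\<^bsub>G\<^esub> h) \<and>
     continuous_map (Metric_space.mtopology (carrier G) \<rho>) (Metric_space.mtopology (carrier G) \<rho>)
       (\<lambda>g. inv\<^bsub>G\<^esub> g)"

definition proper_metric_group :: "('g, 'b) monoid_scheme \<Rightarrow> ('g \<Rightarrow> 'g \<Rightarrow> real) \<Rightarrow> bool" where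
  "proper_metric_group G \<rho> \<longleftrightarrow>
     metric_group G \<rho> \<and>
     (\<forall>S. closedin (Metric_space.mtopology (carrier G) \<rho>) S \<and> Metric_space.mbounded (carrier G) \<rho> S
          \<longrightarrow> compactin (Metric_space.mtopology (carrier G) \<rho>) S)"

definition group_action_on :: "('g, 'b) monoid_scheme \<Rightarrow> 'x set \<Rightarrow> ('g \<Rightarrow> 'x \<Rightarrow> 'x) \<Rightarrow> bool" where
  "group_action_on G X act \<longleftrightarrow>
     (\<forall>g\<in>carrier G. \<forall>x\<in>X. act g x \<in> X) \<and>
     (\<forall>x\<in>X. act \<one>\<^bsub>G\<^esub> x = x) \<and>
     (\<forall>g\<in>carrier G. \<forall>h\<in>carrier G. \<forall>x\<in>X. act (g \<otimes>\<^bsub>G\<^esub> h) x = act g (act h x))"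

definition isometric_action ::
  "('g, 'b) monoid_scheme \<Rightarrow> 'x set \<Rightarrow> ('x \<Rightarrow> 'x \<Rightarrow> real) \<Rightarrow> ('g \<Rightarrow> 'x \<Rightarrow> 'x) \<Rightarrow> bool" where
  "isometric_action G X d act \<longleftrightarrow>
     (\<forall>g\<in>carrier G. \<forall>x\<in>X. \<forall>x'\<in>X. d (act g x) (act g x') = d x x')"

definition group_conv :: "('g, 'b) monoid_scheme \<Rightarrow> ('g \<Rightarrow> 'g \<Rightarrow> real) \<Rightarrow> (nat \<Rightarrow> 'g) \<Rightarrow> 'g \<Rightarrow> bool" where
  "group_conv G \<rho> gs g \<longleftrightarrow> (\<forall>n. gs n \<in> carrier G) \<and> g \<in> carrier G \<and> (\<lambda>n. \<rho> (gs n) g) \<longlonglongrightarrow> 0"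

definition metric_conv :: "'x set \<Rightarrow> ('x \<Rightarrow> 'x \<Rightarrow> real) \<Rightarrow> (nat \<Rightarrow> 'x) \<Rightarrow> 'x \<Rightarrow> bool" where
  "metric_conv X d xs x \<longleftrightarrow> (\<forall>n. xs n \<in> X) \<and> x \<in> X \<and> (\<lambda>n. d (xs n) x) \<longlonglongrightarrow> 0"

definition compatible_action ::
  "('g, 'b) monoid_scheme \<Rightarrow> ('g \<Rightarrow> 'g \<Rightarrow> real) \<Rightarrow> ('g \<Rightarrow> 'x \<Rightarrow> 'x) \<Rightarrow> ((nat \<Rightarrow> 'x) \<Rightarrow> 'x \<Rightarrow> bool) \<Rightarrow> bool" where
  "compatible_action G \<rho> act c \<longleftrightarrow>
     (\<forall>xs x gs g. c xs x \<and> group_conv G \<rho> gs g \<longrightarrow> c (\<lambda>n. act (gs n) (xs n)) (act g x))"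

text \<open>Regularized metric; the paper writes min, which is attained for proper G, so
  we use the infimum.\<close>
definition regularized_metric ::
  "('g, 'b) monoid_scheme \<Rightarrow> ('g \<Rightarrow> 'g \<Rightarrow> real) \<Rightarrow> ('x \<Rightarrow> 'x \<Rightarrow> real) \<Rightarrow> ('g \<Rightarrow> 'x \<Rightarrow> 'x) \<Rightarrow> 'x \<Rightarrow> 'x \<Rightarrow> real" where
  "regularized_metric G \<rho> d act x x' =
     (INF g\<in>carrier G. sqrt ((\<rho> g \<one>\<^bsub>G\<^esub>)\<^sup>2 + (d x (act g x'))\<^sup>2))"

end

theory Submission
  imports Defs
begin

locale P211 =
  fixes X :: "'x set" and d :: "'x \<Rightarrow> 'x \<Rightarrow> real"
    and w :: "(nat \<Rightarrow> 'x) \<Rightarrow> 'x \<Rightarrow> bool"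
    and G :: "('g, 'b) monoid_scheme" and \<rho> :: "'g \<Rightarrow> 'g \<Rightarrow> real"
    and act :: "'g \<Rightarrow> 'x \<Rightarrow> 'x"
  assumes MX: "Metric_space X d"
    and WC: "weak_convergence X d w"
    and PG: "proper_metric_group G \<rho>"
    and GA: "group_action_on G X act"
    and CM: "compatible_action G \<rho> act (metric_conv X d)"
begin

abbreviation "D \<equiv> regularized_metric G \<rho> d act"

lemma grp: "group G" and MG: "Metric_space (carrier G) \<rho>"
  using PG unfolding proper_metric_group_def metric_group_def by auto

lemma one_in: "\<one>\<^bsub>G\<^esub> \<in> carrier G"
  using grp by (simp add: group.is_monoid monoid.one_closed)

lemma act_in: "g \<in> carrier G \<Longrightarrow> x \<in> X \<Longrightarrow> act g x \<in> X"
  using GA unfolding group_action_on_def by auto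

lemma act_one: "x \<in> X \<Longrightarrow> act \<one>\<^bsub>G\<^esub> x = x"
  using GA unfolding group_action_on_def by auto

lemma bdd: "bdd_below ((\<lambda>g. sqrt ((\<rho> g \<one>\<^bsub>G\<^esub>)\<^sup>2 + (d a (act g b))\<^sup>2)) ` carrier G)"
  by (rule bdd_belowI[where m=0]) auto

lemma D_nonneg: "0 \<le> D a b"
  unfolding regularized_metric_def
  using one_in by (intro cINF_greatest) auto

lemma D_lower: "g \<in> carrier G \<Longrightarrow> D a b \<le> sqrt ((\<rho> g \<one>\<^bsub>G\<^esub>)\<^sup>2 + (d a (act g b))\<^sup>2)"
  unfolding regularized_metric_def by (rule cINF_lower[OF bdd])

lemma D_le: "a \<in> X \<Longrightarrow> b \<in> X \<Longrightarrow> D a b \<le> d a b"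
  using D_lower[OF one_in, of a b] one_in act_one Metric_space.mdist_zero[OF MG]
    Metric_space.nonneg[OF MX, of a b] by simp

lemma near: "0 < e \<Longrightarrow> \<exists>g\<in>carrier G. sqrt ((\<rho> g \<one>\<^bsub>G\<^esub>)\<^sup>2 + (d a (act g b))\<^sup>2) < D a b + e"
proof -
  assume "0 < e"
  then have "D a b < D a b + e" by simp
  then show ?thesis unfolding regularized_metric_def
    using cINF_less_iff[OF _ bdd] one_in by blast
qed

lemma choose:
  fixes xs :: "nat \<Rightarrow> 'x" and e :: "nat \<Rightarrow> real"
  assumes "\<And>n. 0 < e n"
  shows "\<exists>gs. \<forall>n. gs n \<in> carrier G \<and>
     sqrt ((\<rho> (gs n) \<one>\<^bsub>G\<^esub>)\<^sup>2 + (d (xs n) (act (gs n) y))\<^sup>2) < D (xs n) y + e n"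
proof -
  have "\<forall>n. \<exists>g. g \<in> carrier G \<and>
     sqrt ((\<rho> g \<one>\<^bsub>G\<^esub>)\<^sup>2 + (d (xs n) (act g y))\<^sup>2) < D (xs n) y + e n"
    using near[OF assms] by blast
  then show ?thesis by (rule choice)
qed

lemma compact_seq:
  fixes gs :: "nat \<Rightarrow> 'g"
  assumes "\<And>n. gs n \<in> carrier G" "\<And>n. \<rho> (gs n) \<one>\<^bsub>G\<^esub> \<le> R"
  shows "\<exists>s g. strict_mono s \<and> g \<in> carrier G \<and> (\<lambda>n. \<rho> (gs (s n)) g) \<longlonglongrightarrow> 0"
proof -
  interpret M: Metric_space "carrier G" \<rho> by (rule MG)
  let ?S = "M.mcball \<one>\<^bsub>G\<^esub> R"
  have PS: "\<forall>S. closedin M.mtopology S \<and> M.mbounded S \<longrightarrow> compactin M.mtopology S"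
    using PG unfolding proper_metric_group_def by (elim conjE) assumption
  have C: "compactin M.mtopology ?S"
    using PS M.mbounded_mcball M.closedin_mcball by blast
  have R: "range gs \<subseteq> ?S"
  proof
    fix z assume "z \<in> range gs"
    then obtain n where z: "z = gs n" by blast
    have "\<rho> \<one>\<^bsub>G\<^esub> (gs n) \<le> R" using assms(2)[of n] M.commute[of "gs n"] by simp
    then show "z \<in> ?S" unfolding z M.mcball_def using assms(1)[of n] one_in by blast
  qed
  have "\<forall>\<sigma>::nat\<Rightarrow>'g. range \<sigma> \<subseteq> ?S
         \<longrightarrow> (\<exists>l r. l \<in> ?S \<and> strict_mono r \<and> limitin M.mtopology (\<sigma> \<circ> r) l sequentially)"
    using C unfolding M.compactin_sequentially by (rule conjunct2)
  from this[rule_format, OF R] obtain l r where l: "l \<in> ?S" "strict_mono r" "limitin M.mtopology (gs \<circ> r) l sequentially"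
    by (elim exE conjE)
  have "l \<in> carrier G" using l(1) by (auto simp: M.mcball_def)
  moreover have "(\<lambda>n. \<rho> (gs (r n)) l) \<longlonglongrightarrow> 0"
  proof (rule tendstoI)
    fix e :: real assume "0 < e"
    then have "\<forall>\<^sub>F n in sequentially. (gs \<circ> r) n \<in> carrier G \<and> \<rho> ((gs \<circ> r) n) l < e"
      using l(3) unfolding M.limitin_metric by blast
    then show "\<forall>\<^sub>F n in sequentially. dist (\<rho> (gs (r n)) l) 0 < e"
      by (rule eventually_mono) simp
  qed
  ultimately show ?thesis using l(2) by blast
qed

lemma act_conv:
  fixes gs :: "nat \<Rightarrow> 'g"
  assumes "group_conv G \<rho> gs g" "y \<in> X"
  shows "(\<lambda>n. d (act (gs n) y) (act g y)) \<longlonglongrightarrow> 0"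
proof -
  have "metric_conv X d (\<lambda>_. y) y"
    using assms(2) Metric_space.mdist_zero[OF MX] by (simp add: metric_conv_def)
  then have "metric_conv X d (\<lambda>n. act (gs n) y) (act g y)"
    using CM assms(1) unfolding compatible_action_def by blast
  then show ?thesis by (simp add: metric_conv_def)
qed


lemma Bseq_upper:
  fixes f :: "nat \<Rightarrow> real"
  assumes "Bseq f" shows "\<exists>B. \<forall>n. f n \<le> B"
proof -
  obtain K where K: "\<forall>n. norm (f n) \<le> K" using assms unfolding Bseq_def by blast
  have "f n \<le> K" for n using K[rule_format, of n] by (simp add: abs_le_iff)
  then show ?thesis by blast
qed

lemma WC_parts:
  shows conv: "convergence X w"
    and W1: "\<And>xs y. (\<forall>n. xs n \<in> X) \<Longrightarrow> y \<in> X \<Longrightarrow> bdd_above (range (\<lambda>n. d (xs n) y)) \<Longrightarrow>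
        (\<exists>r x. strict_mono (r :: nat \<Rightarrow> nat) \<and> x \<in> X \<and> w (xs \<circ> r) x)"
    and W2: "\<And>xs x y. w xs x \<Longrightarrow> y \<in> X \<Longrightarrow> ereal (d x y) \<le> liminf (\<lambda>n. ereal (d (xs n) y))"
    and W3: "\<And>xs x y. w xs x \<Longrightarrow> y \<in> X \<Longrightarrow> (\<lambda>n. d (xs n) y) \<longlonglongrightarrow> d x y \<Longrightarrow>
        (\<lambda>n. d (xs n) x) \<longlonglongrightarrow> 0"
  using WC unfolding weak_convergence_def by blast+

lemma conv_sub: "w xs x \<Longrightarrow> strict_mono (r::nat\<Rightarrow>nat) \<Longrightarrow> w (xs \<circ> r) x"
  using conv unfolding convergence_def by blast

lemma conv_in: "w xs x \<Longrightarrow> xs n \<in> X" "w xs x \<Longrightarrow> x \<in> X"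
  using conv unfolding convergence_def by blast+

lemma core:
  fixes xs :: "nat \<Rightarrow> 'x"
  assumes wx: "w xs x" and y: "y \<in> X" and lim: "(\<lambda>n. D (xs n) y) \<longlonglongrightarrow> l"
  shows "\<exists>r. strict_mono r \<and> D x y \<le> l \<and> (D x y = l \<longrightarrow> (\<lambda>n. d (xs (r n)) x) \<longlonglongrightarrow> 0)"
proof -
  interpret MX: Metric_space X d by (rule MX)
  interpret M: Metric_space "carrier G" \<rho> by (rule MG)
  have xsX: "\<And>n. xs n \<in> X" and xX: "x \<in> X" using conv_in[OF wx] by auto
  define e where "e = (\<lambda>n::nat. inverse (real (Suc n)))"
  have epos: "\<And>n. 0 < e n" by (simp add: e_def)
  have e1: "\<And>n. e n \<le> 1" unfolding e_def by (simp add: inverse_le_1_iff)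
  have e0: "e \<longlonglongrightarrow> 0" unfolding e_def by (rule LIMSEQ_inverse_real_of_nat)
  obtain gs where gs: "\<And>n. gs n \<in> carrier G"
    "\<And>n. sqrt ((\<rho> (gs n) \<one>\<^bsub>G\<^esub>)\<^sup>2 + (d (xs n) (act (gs n) y))\<^sup>2) < D (xs n) y + e n"
    using choose[where e=e and xs=xs and y=y] epos by blast
  have "Bseq (\<lambda>n. D (xs n) y)" using lim by (rule convergent_imp_Bseq[OF convergentI])
  then obtain B where B: "\<And>n. D (xs n) y \<le> B" using Bseq_upper by blast
  have DB: "D (xs n) y + e n \<le> B + 1" for n using B[of n] e1[of n] by (rule add_mono)
  have rb: "\<rho> (gs n) \<one>\<^bsub>G\<^esub> \<le> B + 1" for n
    using le_less_trans[OF real_sqrt_sum_squares_ge1 gs(2)[of n]] DB[of n] by (rule less_le_trans[THEN less_imp_le])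
  have db: "d (xs n) (act (gs n) y) \<le> B + 1" for n
    using le_less_trans[OF real_sqrt_sum_squares_ge2 gs(2)[of n]] DB[of n] by (rule less_le_trans[THEN less_imp_le])
  obtain s g where s: "strict_mono s" "g \<in> carrier G" "(\<lambda>n. \<rho> (gs (s n)) g) \<longlonglongrightarrow> 0"
    using compact_seq[of gs "B + 1", OF gs(1) rb] by (elim exE conjE)
  have gc: "group_conv G \<rho> (gs \<circ> s) g" using s gs(1) by (simp add: group_conv_def o_def)
  have delta: "(\<lambda>n. d (act (gs (s n)) y) (act g y)) \<longlonglongrightarrow> 0" using act_conv[OF gc y] by (simp add: o_def)
  have gy: "act g y \<in> X" using act_in s(2) y by blast
  have gsy: "act (gs n) y \<in> X" for n using act_in gs(1) y by blast
  have "Bseq (\<lambda>n. d (act (gs (s n)) y) (act g y))" using delta by (rule convergent_imp_Bseq[OF convergentI])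
  then obtain C where C: "\<And>n. d (act (gs (s n)) y) (act g y) \<le> C" using Bseq_upper by blast
  define u where "u = (\<lambda>n. d (xs (s n)) (act g y))"
  have ub: "\<bar>u n\<bar> \<le> B + 1 + C" for n
  proof -
    have "u n \<le> d (xs (s n)) (act (gs (s n)) y) + d (act (gs (s n)) y) (act g y)"
      unfolding u_def by (rule MX.triangle[OF xsX gsy gy])
    moreover have "d (xs (s n)) (act (gs (s n)) y) \<le> B + 1" by (rule db)
    ultimately show ?thesis using C[of n] by (simp add: u_def)
  qed
  have "bounded (range u)" unfolding bounded_real using ub by blast
  then obtain m t where t: "strict_mono t" "(u \<circ> t) \<longlonglongrightarrow> m"
    using bounded_imp_convergent_subsequence by blast
  define r where "r = s \<circ> t"
  have r: "strict_mono r" unfolding r_def using strict_mono_o s(1) t(1) by blast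
  have delta_t: "(\<lambda>n. d (act (gs (r n)) y) (act g y)) \<longlonglongrightarrow> 0"
    using LIMSEQ_subseq_LIMSEQ[OF delta t(1)] by (simp add: r_def o_def)
  have ut: "(\<lambda>n. u (t n)) \<longlonglongrightarrow> m" using t(2) by (simp add: o_def)
  have v: "(\<lambda>n. d (xs (r n)) (act (gs (r n)) y)) \<longlonglongrightarrow> m"
  proof (rule tendsto_sandwich[of "\<lambda>n. u (t n) - d (act (gs (r n)) y) (act g y)" _ _
        "\<lambda>n. u (t n) + d (act (gs (r n)) y) (act g y)"])
    show "\<forall>\<^sub>F n in sequentially. u (t n) - d (act (gs (r n)) y) (act g y) \<le> d (xs (r n)) (act (gs (r n)) y)"
    proof (intro always_eventually allI)
      fix n
      have "u (t n) \<le> d (xs (r n)) (act (gs (r n)) y) + d (act (gs (r n)) y) (act g y)"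
        unfolding u_def r_def o_def by (rule MX.triangle[OF xsX gsy gy])
      then show "u (t n) - d (act (gs (r n)) y) (act g y) \<le> d (xs (r n)) (act (gs (r n)) y)" by simp
    qed
    show "\<forall>\<^sub>F n in sequentially. d (xs (r n)) (act (gs (r n)) y) \<le> u (t n) + d (act (gs (r n)) y) (act g y)"
    proof (intro always_eventually allI)
      fix n
      have "d (xs (r n)) (act (gs (r n)) y) \<le> u (t n) + d (act g y) (act (gs (r n)) y)"
        unfolding u_def r_def o_def by (rule MX.triangle[OF xsX gy gsy])
      then show "d (xs (r n)) (act (gs (r n)) y) \<le> u (t n) + d (act (gs (r n)) y) (act g y)"
        by (simp add: MX.commute)
    qed
    show "(\<lambda>n. u (t n) - d (act (gs (r n)) y) (act g y)) \<longlonglongrightarrow> m"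
      using tendsto_diff[OF ut delta_t] by simp
    show "(\<lambda>n. u (t n) + d (act (gs (r n)) y) (act g y)) \<longlonglongrightarrow> m"
      using tendsto_add[OF ut delta_t] by simp
  qed
  have rho_t: "(\<lambda>n. \<rho> (gs (r n)) g) \<longlonglongrightarrow> 0"
    using LIMSEQ_subseq_LIMSEQ[OF s(3) t(1)] by (simp add: r_def o_def)
  have p: "(\<lambda>n. \<rho> (gs (r n)) \<one>\<^bsub>G\<^esub>) \<longlonglongrightarrow> \<rho> g \<one>\<^bsub>G\<^esub>"
  proof (rule tendsto_sandwich[of "\<lambda>n. \<rho> g \<one>\<^bsub>G\<^esub> - \<rho> (gs (r n)) g" _ _
        "\<lambda>n. \<rho> g \<one>\<^bsub>G\<^esub> + \<rho> (gs (r n)) g"])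
    show "\<forall>\<^sub>F n in sequentially. \<rho> g \<one>\<^bsub>G\<^esub> - \<rho> (gs (r n)) g \<le> \<rho> (gs (r n)) \<one>\<^bsub>G\<^esub>"
    proof (intro always_eventually allI)
      fix n
      have "\<rho> g \<one>\<^bsub>G\<^esub> \<le> \<rho> g (gs (r n)) + \<rho> (gs (r n)) \<one>\<^bsub>G\<^esub>"
        by (rule M.triangle[OF s(2) gs(1) one_in])
      then show "\<rho> g \<one>\<^bsub>G\<^esub> - \<rho> (gs (r n)) g \<le> \<rho> (gs (r n)) \<one>\<^bsub>G\<^esub>" by (simp add: M.commute)
    qed
    show "\<forall>\<^sub>F n in sequentially. \<rho> (gs (r n)) \<one>\<^bsub>G\<^esub> \<le> \<rho> g \<one>\<^bsub>G\<^esub> + \<rho> (gs (r n)) g"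
    proof (intro always_eventually allI)
      fix n
      have "\<rho> (gs (r n)) \<one>\<^bsub>G\<^esub> \<le> \<rho> (gs (r n)) g + \<rho> g \<one>\<^bsub>G\<^esub>"
        by (rule M.triangle[OF gs(1) s(2) one_in])
      then show "\<rho> (gs (r n)) \<one>\<^bsub>G\<^esub> \<le> \<rho> g \<one>\<^bsub>G\<^esub> + \<rho> (gs (r n)) g" by simp
    qed
    show "(\<lambda>n. \<rho> g \<one>\<^bsub>G\<^esub> - \<rho> (gs (r n)) g) \<longlonglongrightarrow> \<rho> g \<one>\<^bsub>G\<^esub>"
      using tendsto_diff[OF tendsto_const rho_t] by simp
    show "(\<lambda>n. \<rho> g \<one>\<^bsub>G\<^esub> + \<rho> (gs (r n)) g) \<longlonglongrightarrow> \<rho> g \<one>\<^bsub>G\<^esub>"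
      using tendsto_add[OF tendsto_const rho_t] by simp
  qed
  have lim1: "(\<lambda>n. sqrt ((\<rho> (gs (r n)) \<one>\<^bsub>G\<^esub>)\<^sup>2 + (d (xs (r n)) (act (gs (r n)) y))\<^sup>2))
      \<longlonglongrightarrow> sqrt ((\<rho> g \<one>\<^bsub>G\<^esub>)\<^sup>2 + m\<^sup>2)"
    by (intro tendsto_intros p v)
  have limD: "(\<lambda>n. D (xs (r n)) y) \<longlonglongrightarrow> l"
    using LIMSEQ_subseq_LIMSEQ[OF lim r] by (simp add: o_def)
  have lime: "(\<lambda>n. e (r n)) \<longlonglongrightarrow> 0"
    using LIMSEQ_subseq_LIMSEQ[OF e0 r] by (simp add: o_def)
  have lim2: "(\<lambda>n. D (xs (r n)) y + e (r n)) \<longlonglongrightarrow> l"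
    using tendsto_add[OF limD lime] by simp
  have le1: "sqrt ((\<rho> g \<one>\<^bsub>G\<^esub>)\<^sup>2 + m\<^sup>2) \<le> l"
    using LIMSEQ_le[OF lim1 lim2] gs(2) less_imp_le by blast
  have wr: "w (xs \<circ> r) x" using conv_sub[OF wx r] .
  have ulim: "(\<lambda>n. d (xs (r n)) (act g y)) \<longlonglongrightarrow> m" using ut by (simp add: u_def r_def)
  have "ereal (d x (act g y)) \<le> liminf (\<lambda>n. ereal (d ((xs \<circ> r) n) (act g y)))"
    using W2[OF wr gy] .
  also have "(\<lambda>n. ereal (d ((xs \<circ> r) n) (act g y))) \<longlonglongrightarrow> ereal m" using ulim by (simp add: o_def)
  then have "liminf (\<lambda>n. ereal (d ((xs \<circ> r) n) (act g y))) = ereal m"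
    by (rule lim_imp_Liminf[OF sequentially_bot])
  finally have dm: "d x (act g y) \<le> m" by simp
  have m0: "0 \<le> m" using dm MX.nonneg[of x "act g y"] by linarith
  have Dle: "D x y \<le> sqrt ((\<rho> g \<one>\<^bsub>G\<^esub>)\<^sup>2 + (d x (act g y))\<^sup>2)" by (rule D_lower[OF s(2)])
  have "(d x (act g y))\<^sup>2 \<le> m\<^sup>2" using dm MX.nonneg[of x "act g y"] by (rule power_mono)
  then have sq: "sqrt ((\<rho> g \<one>\<^bsub>G\<^esub>)\<^sup>2 + (d x (act g y))\<^sup>2) \<le> sqrt ((\<rho> g \<one>\<^bsub>G\<^esub>)\<^sup>2 + m\<^sup>2)"
    by simp
  show ?thesis
  proof (intro exI conjI impI)
    show "strict_mono r" by (rule r)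
    show "D x y \<le> l" using Dle sq le1 by linarith
    assume eq: "D x y = l"
    then have "sqrt ((\<rho> g \<one>\<^bsub>G\<^esub>)\<^sup>2 + (d x (act g y))\<^sup>2) = sqrt ((\<rho> g \<one>\<^bsub>G\<^esub>)\<^sup>2 + m\<^sup>2)"
      using Dle sq le1 by linarith
    then have "(d x (act g y))\<^sup>2 = m\<^sup>2" by simp
    then have "d x (act g y) = m" using m0 MX.nonneg[of x "act g y"] power2_eq_iff_nonneg by blast
    then have "(\<lambda>n. d ((xs \<circ> r) n) (act g y)) \<longlonglongrightarrow> d x (act g y)" using ulim by (simp add: o_def)
    then have "(\<lambda>n. d ((xs \<circ> r) n) x) \<longlonglongrightarrow> 0" using W3[OF wr gy] by blast
    then show "(\<lambda>n. d (xs (r n)) x) \<longlonglongrightarrow> 0" by (simp add: o_def)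
  qed
qed

lemma W1D:
  fixes xs :: "nat \<Rightarrow> 'x"
  assumes xsX: "\<And>n. xs n \<in> X" and y: "y \<in> X" and bd: "bdd_above (range (\<lambda>n. D (xs n) y))"
  shows "\<exists>r x. strict_mono (r::nat\<Rightarrow>nat) \<and> x \<in> X \<and> w (xs \<circ> r) x"
proof -
  interpret MX: Metric_space X d by (rule MX)
  obtain B where B: "\<And>n. D (xs n) y \<le> B" using bd by (auto simp: bdd_above_def)
  define e where "e = (\<lambda>n::nat. 1::real)"
  have epos: "\<And>n. 0 < e n" by (simp add: e_def)
  obtain gs where gs: "\<And>n. gs n \<in> carrier G"
    "\<And>n. sqrt ((\<rho> (gs n) \<one>\<^bsub>G\<^esub>)\<^sup>2 + (d (xs n) (act (gs n) y))\<^sup>2) < D (xs n) y + e n"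
    using choose[where e=e and xs=xs and y=y] epos by blast
  have DB: "D (xs n) y + e n \<le> B + 1" for n using B[of n] by (simp add: e_def)
  have rb: "\<rho> (gs n) \<one>\<^bsub>G\<^esub> \<le> B + 1" for n
    using le_less_trans[OF real_sqrt_sum_squares_ge1 gs(2)[of n]] DB[of n] by (rule less_le_trans[THEN less_imp_le])
  have db: "d (xs n) (act (gs n) y) \<le> B + 1" for n
    using le_less_trans[OF real_sqrt_sum_squares_ge2 gs(2)[of n]] DB[of n] by (rule less_le_trans[THEN less_imp_le])
  obtain s g where s: "strict_mono s" "g \<in> carrier G" "(\<lambda>n. \<rho> (gs (s n)) g) \<longlonglongrightarrow> 0"
    using compact_seq[of gs "B + 1", OF gs(1) rb] by (elim exE conjE)
  have gc: "group_conv G \<rho> (gs \<circ> s) g" using s gs(1) by (simp add: group_conv_def o_def)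
  have delta: "(\<lambda>n. d (act (gs (s n)) y) (act g y)) \<longlonglongrightarrow> 0" using act_conv[OF gc y] by (simp add: o_def)
  have gy: "act g y \<in> X" using act_in s(2) y by blast
  have gsy: "act (gs n) y \<in> X" for n using act_in gs(1) y by blast
  have "Bseq (\<lambda>n. d (act (gs (s n)) y) (act g y))" using delta by (rule convergent_imp_Bseq[OF convergentI])
  then obtain C where C: "\<And>n. d (act (gs (s n)) y) (act g y) \<le> C" using Bseq_upper by blast
  have bnd: "d ((xs \<circ> s) n) y \<le> B + 1 + C + d (act g y) y" for n
  proof -
    have "d (xs (s n)) y \<le> d (xs (s n)) (act g y) + d (act g y) y" by (rule MX.triangle[OF xsX gy y])
    moreover have "d (xs (s n)) (act g y) \<le> d (xs (s n)) (act (gs (s n)) y) + d (act (gs (s n)) y) (act g y)"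
      by (rule MX.triangle[OF xsX gsy gy])
    moreover have "d (xs (s n)) (act (gs (s n)) y) \<le> B + 1" by (rule db)
    ultimately show ?thesis using C[of n] by simp
  qed
  have "bdd_above (range (\<lambda>n. d ((xs \<circ> s) n) y))" using bnd by (intro bdd_aboveI2) 
  then obtain r x where rx: "strict_mono r" "x \<in> X" "w ((xs \<circ> s) \<circ> r) x"
    using W1[of "xs \<circ> s" y] xsX y by auto
  show ?thesis
  proof (intro exI conjI)
    show "strict_mono (s \<circ> r)" using strict_mono_o s(1) rx(1) by blast
    show "x \<in> X" by (rule rx(2))
    show "w (xs \<circ> (s \<circ> r)) x" using rx(3) by (simp add: o_assoc)
  qed
qed

end

theorem proposition2p11:
  fixes X :: "'x set" and d :: "'x \<Rightarrow> 'x \<Rightarrow> real"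
    and w :: "(nat \<Rightarrow> 'x) \<Rightarrow> 'x \<Rightarrow> bool"
    and G :: "('g, 'b) monoid_scheme" and \<rho> :: "'g \<Rightarrow> 'g \<Rightarrow> real"
    and act :: "'g \<Rightarrow> 'x \<Rightarrow> 'x"
  assumes "Metric_space X d"
    and "weak_convergence X d w"
    and "proper_metric_group G \<rho>"
    and "group_action_on G X act"
    and "isometric_action G X d act"
    and "compatible_action G \<rho> act (metric_conv X d)"
    and "compatible_action G \<rho> act w"
  shows "weak_convergence X (regularized_metric G \<rho> d act) w"
proof -
  interpret P: P211 X d w G \<rho> act
    using assms by (simp add: P211_def)
  show ?thesis unfolding weak_convergence_def
  proof (intro conjI allI impI)
    show "convergence X w" by (rule P.conv)
  next
    fix xs :: "nat \<Rightarrow> 'x" and y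
    assume a: "(\<forall>n. xs n \<in> X) \<and> y \<in> X \<and> bdd_above (range (\<lambda>n. P.D (xs n) y))"
    then show "\<exists>r x. strict_mono (r::nat\<Rightarrow>nat) \<and> x \<in> X \<and> w (xs \<circ> r) x"
      using P.W1D[of xs y] by blast
  next
    fix xs :: "nat \<Rightarrow> 'x" and x y
    assume a: "w xs x \<and> y \<in> X"
    then have wx: "w xs x" and y: "y \<in> X" by auto
    let ?u = "\<lambda>n. ereal (P.D (xs n) y)"
    obtain r where r: "strict_mono r" "(?u \<circ> r) \<longlonglongrightarrow> liminf ?u"
      using liminf_subseq_lim by blast
    have L0: "0 \<le> liminf ?u"
      by (intro LIMSEQ_le_const[OF r(2)]) (auto simp: P.D_nonneg)
    show "ereal (P.D x y) \<le> liminf ?u"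
    proof (cases "liminf ?u")
      case (real l)
      then have lim: "(\<lambda>n. P.D ((xs \<circ> r) n) y) \<longlonglongrightarrow> l" using r(2) by (simp add: o_def)
      obtain r' where "P.D x y \<le> l" using P.core[OF P.conv_sub[OF wx r(1)] y lim] by blast
      then show ?thesis using real by simp
    next
      case PInf then show ?thesis by simp
    next
      case MInf then show ?thesis using L0 by simp
    qed
  next
    fix xs :: "nat \<Rightarrow> 'x" and x y
    assume a: "w xs x \<and> y \<in> X \<and> (\<lambda>n. P.D (xs n) y) \<longlonglongrightarrow> P.D x y"
    then have wx: "w xs x" and y: "y \<in> X" and lim: "(\<lambda>n. P.D (xs n) y) \<longlonglongrightarrow> P.D x y" by auto
    show "(\<lambda>n. P.D (xs n) x) \<longlonglongrightarrow> 0"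
    proof (rule ccontr)
      assume nt: "\<not> (\<lambda>n. P.D (xs n) x) \<longlonglongrightarrow> 0"
      have "\<exists>\<epsilon>>0. \<forall>N. \<exists>n\<ge>N. \<epsilon> \<le> P.D (xs n) x"
      proof (rule ccontr)
        assume H0: "\<not> (\<exists>\<epsilon>>0. \<forall>N. \<exists>n\<ge>N. \<epsilon> \<le> P.D (xs n) x)"
        have H: "\<exists>N. \<forall>n\<ge>N. P.D (xs n) x < \<epsilon>" if ep: "\<epsilon> > 0" for \<epsilon>
        proof -
          obtain N where N: "\<not> (\<exists>n\<ge>N. \<epsilon> \<le> P.D (xs n) x)" using H0 ep by blast
          have "\<forall>n\<ge>N. P.D (xs n) x < \<epsilon>"
          proof (intro allI impI)
            fix n :: nat assume "N \<le> n"
            then have "\<not> \<epsilon> \<le> P.D (xs n) x" using N by blast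
            then show "P.D (xs n) x < \<epsilon>" by (rule not_le_imp_less)
          qed
          then show ?thesis by blast
        qed
        have "(\<lambda>n. P.D (xs n) x) \<longlonglongrightarrow> 0"
        proof (rule LIMSEQ_I)
          fix r :: real assume "0 < r"
          then obtain N where N: "\<forall>n\<ge>N. P.D (xs n) x < r" using H by blast
          show "\<exists>no. \<forall>n\<ge>no. norm (P.D (xs n) x - 0) < r"
          proof (intro exI allI impI)
            fix n assume "N \<le> n"
            then show "norm (P.D (xs n) x - 0) < r" using N P.D_nonneg[of "xs n" x] by simp
          qed
        qed
        with nt show False by contradiction
      qed
      then obtain \<epsilon> where e: "\<epsilon> > 0" "\<forall>N. \<exists>n\<ge>N. \<epsilon> \<le> P.D (xs n) x" by blast
      then have "infinite {n. \<epsilon> \<le> P.D (xs n) x}" by (simp add: infinite_nat_iff_unbounded_le)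
      then have ex: "\<exists>r::nat\<Rightarrow>nat. strict_mono r \<and> (\<forall>n. r n \<in> {n. \<epsilon> \<le> P.D (xs n) x})"
        by (rule infinite_enumerate)
      define r where "r = (SOME r::nat\<Rightarrow>nat. strict_mono r \<and> (\<forall>n. r n \<in> {n. \<epsilon> \<le> P.D (xs n) x}))"
      have r0: "strict_mono r \<and> (\<forall>n. r n \<in> {n. \<epsilon> \<le> P.D (xs n) x})"
        unfolding r_def by (rule someI_ex[OF ex])
      have r: "strict_mono r" "\<forall>n. r n \<in> {n. \<epsilon> \<le> P.D (xs n) x}" using r0 by (rule conjunct1, rule conjunct2)
      have limr: "(\<lambda>n. P.D ((xs \<circ> r) n) y) \<longlonglongrightarrow> P.D x y"
        using LIMSEQ_subseq_LIMSEQ[OF lim r(1)] by (simp add: o_def)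
      from P.core[OF P.conv_sub[OF wx r(1)] y limr]
      obtain r' where r': "strict_mono r'" "(\<lambda>n. d ((xs \<circ> r) (r' n)) x) \<longlonglongrightarrow> 0"
        by (elim exE conjE) simp
      have xX: "x \<in> X" using P.conv_in(2)[OF wx] .
      have xsX: "\<And>n. xs n \<in> X" using P.conv_in(1)[OF wx] .
      have "(\<lambda>n. P.D ((xs \<circ> r) (r' n)) x) \<longlonglongrightarrow> 0"
      proof (rule tendsto_sandwich[OF _ _ tendsto_const r'(2)])
        show "\<forall>\<^sub>F n in sequentially. 0 \<le> P.D ((xs \<circ> r) (r' n)) x" by (simp add: P.D_nonneg)
        show "\<forall>\<^sub>F n in sequentially. P.D ((xs \<circ> r) (r' n)) x \<le> d ((xs \<circ> r) (r' n)) x"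
          using P.D_le[OF xsX xX] by simp
      qed
      moreover have "\<exists>N. \<forall>n\<ge>N. \<epsilon> \<le> P.D ((xs \<circ> r) (r' n)) x"
      proof (intro exI allI impI)
        fix n :: nat
        have "r (r' n) \<in> {n. \<epsilon> \<le> P.D (xs n) x}" using r(2) by blast
        then show "\<epsilon> \<le> P.D ((xs \<circ> r) (r' n)) x" by simp
      qed
      ultimately have "\<epsilon> \<le> 0" by (rule LIMSEQ_le_const)
      with e(1) show False by simp
    qed
  qed
qed

end
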